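(* Let $n\in\mathbb{N}$, $\omega=\omega_n=\frac{n^2}{4}$, and $c>0$ such that $\frac{n^2+c^2}{2c}\notin\mathbb{Z}'$, where $\mathbb{Z}'$ is the set of even integers if $n$ is even and of odd integers if $n$ is odd. Consider the linear system of uncoupled ODEs $$\psi_m''(y)+i(m-c)\psi_m'(y)+\left(\omega-\frac{m^2}{4}\right)\psi_m(y)=0,\qquad m\in\mathbb{Z}',$$ whose solutions are spanned by $\psi_{m'}(y)=e^{\kappa y}\delta_{m,m'}$, where $\kappa$ is a root of $\kappa^2+i(m-c)\kappa+\omega-\frac{m^2}{4}=0$, i.e. $$\kappa=\kappa_m^{\pm}=\frac{i(c-m)\pm\sqrt{2cm-n^2-c^2}}{2},\qquad m\in\mathbb{Z}'.$$ Let $m_0$ be the largest element of $\mathbb{Z}'$ not exceeding $\frac{n^2+c^2}{2c}$, and let $E_m^{\pm}$ denote the eigenspace associated with the $m$-th Fourier component corresponding to the root $\kappa_m^{\pm}$. Then: (i) the phase space of this linear system decomposes into the direct sum $E^s\oplus E^u\oplus E^{c^+}\oplus E^{c^-}$, where $E^s=\oplus_{m>m_0}E_m^+$, $E^u=\oplus_{m>m_0}E_m^-$, $E^{c^+}=\oplus_{m\le m_0}E_m^+$, $E^{c^-}=\oplus_{m\le m_0}E_m^-$ (with $m\in\mathbb{Z}'$); (ii) considering all roots $\kappa_m^\pm$, $m\in\mathbb{Z}'$, together, the zero root $\kappa=0$ is semi-simple of multiplicity two, the purely imaginary roots $\kappa\in i\mathbb{R}$ are semi-simple of multiplicity at most three,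 and all other roots $\kappa\in\mathbb{C}$ are simple.
   Context: This linear system is the linearization at zero, with $\epsilon=0$, of the Fourier-mode system obtained from traveling solutions $\psi(x,y)=\sqrt{\epsilon}\sum_{m\in\mathbb{Z}'}\psi_m(y)e^{imx/2}$, $y=x-ct$, of a Gross--Pitaevskii equation. *)

theory Defs
  imports "HOL-Analysis.Analysis"
begin

definition Zp :: "nat \<Rightarrow> int set" where
  "Zp n = {m. even m = even n}"

definition omega :: "nat \<Rightarrow> real" where
  "omega n = (real n)^2 / 4"

definition m0 :: "nat \<Rightarrow> real \<Rightarrow> int" where
  "m0 n c = (GREATEST m. m \<in> Zp n \<and> real_of_int m \<le> ((real n)^2 + c^2) / (2*c))"

definition kappa :: "nat \<Rightarrow> real \<Rightarrow> int \<Rightarrow> bool \<Rightarrow> complex" where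
  "kappa n c m s = (\<i> * complex_of_real (c - real_of_int m)
      + (if s then 1 else -1) * csqrt (complex_of_real (2*c*real_of_int m - (real n)^2 - c^2))) / 2"

text \<open>First-order form of the m-th ODE: (psi, psi') \<mapsto> (psi', psi'').\<close>
definition Amul :: "nat \<Rightarrow> real \<Rightarrow> int \<Rightarrow> complex \<times> complex \<Rightarrow> complex \<times> complex" where
  "Amul n c m w = (snd w,
      complex_of_real ((real_of_int m)^2 / 4 - omega n) * fst w
      - \<i> * complex_of_real (real_of_int m - c) * snd w)"

definition cscale :: "complex \<Rightarrow> complex \<times> complex \<Rightarrow> complex \<times> complex" where
  "cscale k w = (k * fst w, k * snd w)"

text \<open>Phase space: finitely supported families of (psi_m, psi_m') indexed by Z'.\<close>
definition phase :: "nat \<Rightarrow> (int \<Rightarrow> complex \<times> complex) set" where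
  "phase n = {v. finite {m. v m \<noteq> 0} \<and> (\<forall>m. m \<notin> Zp n \<longrightarrow> v m = 0)}"

definition Aop :: "nat \<Rightarrow> real \<Rightarrow> (int \<Rightarrow> complex \<times> complex) \<Rightarrow> (int \<Rightarrow> complex \<times> complex)" where
  "Aop n c v = (\<lambda>m. Amul n c m (v m))"

definition Eig :: "nat \<Rightarrow> real \<Rightarrow> int \<Rightarrow> bool \<Rightarrow> (int \<Rightarrow> complex \<times> complex) set" where
  "Eig n c m s = {v \<in> phase n. (\<forall>j. j \<noteq> m \<longrightarrow> v j = 0)
      \<and> Amul n c m (v m) = cscale (kappa n c m s) (v m)}"

definition Esum :: "nat \<Rightarrow> real \<Rightarrow> int set \<Rightarrow> bool \<Rightarrow> (int \<Rightarrow> complex \<times> complex) set" where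
  "Esum n c S s = {v. \<exists>F w. finite F \<and> F \<subseteq> S \<and> (\<forall>m\<in>F. w m \<in> Eig n c m s)
      \<and> v = (\<lambda>j. \<Sum>m\<in>F. w m j)}"

definition Es :: "nat \<Rightarrow> real \<Rightarrow> (int \<Rightarrow> complex \<times> complex) set" where
  "Es n c = Esum n c {m \<in> Zp n. m > m0 n c} True"
definition Eu :: "nat \<Rightarrow> real \<Rightarrow> (int \<Rightarrow> complex \<times> complex) set" where
  "Eu n c = Esum n c {m \<in> Zp n. m > m0 n c} False"
definition Ecp :: "nat \<Rightarrow> real \<Rightarrow> (int \<Rightarrow> complex \<times> complex) set" where
  "Ecp n c = Esum n c {m \<in> Zp n. m \<le> m0 n c} True"
definition Ecm :: "nat \<Rightarrow> real \<Rightarrow> (int \<Rightarrow> complex \<times> complex) set" where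
  "Ecm n c = Esum n c {m \<in> Zp n. m \<le> m0 n c} False"

text \<open>Multiplicity of k among all roots kappa_m^{+/-}, m in Z' (counted with the sign label).\<close>
definition root_set :: "nat \<Rightarrow> real \<Rightarrow> complex \<Rightarrow> (int \<times> bool) set" where
  "root_set n c k = {(m, s). m \<in> Zp n \<and> kappa n c m s = k}"

definition root_mult :: "nat \<Rightarrow> real \<Rightarrow> complex \<Rightarrow> nat" where
  "root_mult n c k = card (root_set n c k)"

text \<open>Semi-simple: the generalized eigenspace equals the eigenspace,
  i.e. ker (A - k)^2 = ker (A - k) on the phase space.\<close>
definition semisimple :: "nat \<Rightarrow> real \<Rightarrow> complex \<Rightarrow> bool" where
  "semisimple n c k = (\<forall>v \<in> phase n.
      let B = (\<lambda>u. \<lambda>m. Aop n c u m - cscale k (u m)) in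
      B (B v) = (\<lambda>m. 0) \<longrightarrow> B v = (\<lambda>m. 0))"

end

theory Submission
  imports Defs
begin


definition F :: "complex \<Rightarrow> complex \<Rightarrow> complex \<times> complex \<Rightarrow> complex \<times> complex" where
  "F k1 k2 w = (snd w, -(k1*k2) * fst w + (k1+k2) * snd w)"

lemma Amul_F: "Amul n c m w = F (kappa n c m True) (kappa n c m False) w"
proof -
  define D where "D = complex_of_real (2*c*real_of_int m - (real n)^2 - c^2)"
  define a where "a = \<i> * complex_of_real (c - real_of_int m)"
  have k1: "kappa n c m True = (a + csqrt D)/2" by (simp add: kappa_def a_def D_def)
  have k2: "kappa n c m False = (a - csqrt D)/2" by (simp add: kappa_def a_def D_def)
  have sq: "csqrt D ^2 = D" by simp
  have s: "kappa n c m True + kappa n c m False = - \<i> * complex_of_real (real_of_int m - c)"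
    unfolding k1 k2 a_def by (simp add: field_simps)
  have p: "kappa n c m True * kappa n c m False = (a^2 - D)/4"
    unfolding k1 k2 using sq by (simp add: field_simps power2_eq_square)
  also have "\<dots> = - complex_of_real ((real_of_int m)^2 / 4 - omega n)"
    unfolding a_def D_def omega_def by (simp add: field_simps power2_eq_square)
  finally show ?thesis using s unfolding Amul_def F_def by simp
qed

lemma F_eig1: "F k1 k2 w = cscale k1 w \<longleftrightarrow> snd w = k1 * fst w"
  by (cases w) (auto simp: F_def cscale_def algebra_simps)
lemma F_eig2: "F k1 k2 w = cscale k2 w \<longleftrightarrow> snd w = k2 * fst w"
  by (cases w) (auto simp: F_def cscale_def algebra_simps)

lemma decomp2:
  fixes k1 k2 :: complex
  assumes "k1 \<noteq> k2"
  shows "\<exists>a b. w = (a, k1*a) + (b, k2*b)"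
proof -
  obtain x y where w: "w = (x,y)" by (cases w)
  define a where "a = (y - k2*x)/(k1-k2)"
  have "(k1-k2)*a = y - k2*x" using assms unfolding a_def by simp
  then have "y = k1*a + k2*(x-a)" by (simp add: algebra_simps)
  then show ?thesis unfolding w by (intro exI[of _ a] exI[of _ "x-a"]) simp
qed

lemma uniq2:
  fixes k1 k2 :: complex and A B A' B' :: "complex \<times> complex"
  assumes "k1 \<noteq> k2" "snd A = k1 * fst A" "snd B = k2 * fst B"
    "snd A' = k1 * fst A'" "snd B' = k2 * fst B'" "A + B = A' + B'"
  shows "A = A' \<and> B = B'"
proof -
  have e1: "fst A + fst B = fst A' + fst B'" using assms(6) by (metis fst_add)
  have e2: "k1 * fst A + k2 * fst B = k1 * fst A' + k2 * fst B'" using assms(6) assms(2-5) by (metis snd_add)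
  have "(k1 - k2) * (fst A - fst A') = (k1*fst A + k2*fst B) - (k1*fst A' + k2*fst B') - k2*((fst A + fst B) - (fst A' + fst B'))"
    by (simp add: algebra_simps)
  then have "(k1 - k2) * (fst A - fst A') = 0" using e1 e2 by simp
  then have "fst A = fst A'" using assms(1) by simp
  then have "fst B = fst B'" using e1 by simp
  then show ?thesis using \<open>fst A = fst A'\<close> assms(2-5) by (simp add: prod_eq_iff)
qed

lemma semis2:
  fixes k :: complex
  assumes "k1 \<noteq> k2"
  defines "g \<equiv> (\<lambda>w. F k1 k2 w - cscale k w)"
  assumes "g (g w) = 0"
  shows "g w = 0"
proof -
  obtain a b where w: "w = (a, k1*a) + (b, k2*b)" using decomp2[OF assms(1)] by blast
  have gw: "g w = ((k1-k)*a + (k2-k)*b, k1*((k1-k)*a) + k2*((k2-k)*b))"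
    unfolding w g_def F_def cscale_def by (simp add: algebra_simps power2_eq_square)
  have ggw: "g (g w) = ((k1-k)^2*a + (k2-k)^2*b, k1*((k1-k)^2*a) + k2*((k2-k)^2*b))"
  proof -
    have "g (g w) = F k1 k2 ((k1-k)*a + (k2-k)*b, k1*((k1-k)*a) + k2*((k2-k)*b))
       - cscale k ((k1-k)*a + (k2-k)*b, k1*((k1-k)*a) + k2*((k2-k)*b))"
      using gw unfolding g_def by simp
    then show ?thesis unfolding F_def cscale_def by (simp add: algebra_simps power2_eq_square)
  qed
  have E1: "(k1-k)^2*a + (k2-k)^2*b = 0" and E2: "k1*((k1-k)^2*a) + k2*((k2-k)^2*b) = 0"
    using assms(3) ggw by (simp_all add: prod_eq_iff)
  have "(k1-k2)*((k1-k)^2*a) = (k1*((k1-k)^2*a) + k2*((k2-k)^2*b)) - k2*((k1-k)^2*a + (k2-k)^2*b)"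
    by (simp add: algebra_simps)
  then have "(k1-k2)*((k1-k)^2*a) = 0" using E1 E2 by simp
  then have "(k1-k)^2*a = 0" using assms(1) by simp
  then have A: "(k1-k)*a = 0" by (simp add: power2_eq_square)
  have "(k2-k1)*((k2-k)^2*b) = (k1*((k1-k)^2*a) + k2*((k2-k)^2*b)) - k1*((k1-k)^2*a + (k2-k)^2*b)"
    by (simp add: algebra_simps)
  then have "(k2-k1)*((k2-k)^2*b) = 0" using E1 E2 by simp
  then have "(k2-k)^2*b = 0" using assms(1) by simp
  then have B: "(k2-k)*b = 0" by (simp add: power2_eq_square)
  show ?thesis unfolding gw using A B by (auto simp: zero_prod_def)
qed



definition dd :: "nat \<Rightarrow> real \<Rightarrow> int \<Rightarrow> real" where
  "dd n c m = 2*c*real_of_int m - (real n)^2 - c^2"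

lemma kappa_pos:
  assumes "dd n c m \<ge> 0"
  shows "Re (kappa n c m s) = (if s then 1 else -1) * sqrt (dd n c m) / 2"
    and "Im (kappa n c m s) = (c - real_of_int m) / 2"
  using assms by (simp_all add: kappa_def dd_def csqrt_of_real)

lemma kappa_neg:
  assumes "dd n c m \<le> 0"
  shows "Re (kappa n c m s) = 0"
    and "Im (kappa n c m s) = (c - real_of_int m + (if s then 1 else -1) * sqrt (- dd n c m)) / 2"
  using assms by (simp_all add: kappa_def dd_def)

lemma dd_nz:
  assumes "c > 0" "\<forall>m \<in> Zp n. real_of_int m \<noteq> ((real n)^2 + c^2) / (2*c)" "m \<in> Zp n"
  shows "dd n c m \<noteq> 0"
proof
  assume "dd n c m = 0"
  then have "real_of_int m = ((real n)^2 + c^2) / (2*c)" using assms(1)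
    by (simp add: dd_def field_simps)
  then show False using assms(2,3) by blast
qed

lemma kappa_dist:
  assumes "dd n c m \<noteq> 0"
  shows "kappa n c m True \<noteq> kappa n c m False"
proof
  assume "kappa n c m True = kappa n c m False"
  then have "csqrt (complex_of_real (dd n c m)) = 0"
    unfolding kappa_def dd_def[symmetric] by (simp add: field_simps)
  then show False using assms by simp
qed

lemma m0_prop:
  assumes "c > 0" "m \<in> Zp n"
  shows "m \<le> m0 n c \<longleftrightarrow> real_of_int m \<le> ((real n)^2 + c^2) / (2*c)"
proof -
  define X where "X = ((real n)^2 + c^2) / (2*c)"
  define g where "g = (if even \<lfloor>X\<rfloor> = even n then \<lfloor>X\<rfloor> else \<lfloor>X\<rfloor> - 1)"
  have gX: "real_of_int g \<le> X" unfolding g_def by (simp add: of_int_floor_le) (smt (verit) of_int_floor_le)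
  have gZ: "g \<in> Zp n" unfolding g_def Zp_def by auto
  have gmax: "y \<le> g" if "y \<in> Zp n" "real_of_int y \<le> X" for y
  proof -
    have "y \<le> \<lfloor>X\<rfloor>" using that(2) by (simp add: le_floor_iff)
    then show ?thesis using that(1) unfolding g_def Zp_def by (cases "y = \<lfloor>X\<rfloor>") auto
  qed
  have "m0 n c = g" unfolding m0_def X_def[symmetric]
    by (rule Greatest_equality) (use gX gZ gmax in auto)
  then show ?thesis using gX gmax assms(2) unfolding X_def[symmetric]
    by (smt (verit) of_int_le_iff)
qed

lemma Amul_eig: "Amul n c m w = cscale (kappa n c m s) w \<longleftrightarrow> snd w = kappa n c m s * fst w"
  by (cases s) (simp_all add: Amul_F F_eig1 F_eig2)

lemma Esum_char:
  assumes "S \<subseteq> Zp n"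
  shows "Esum n c S s = {v. finite {m. v m \<noteq> 0} \<and> (\<forall>j. j \<notin> S \<longrightarrow> v j = 0)
            \<and> (\<forall>j. snd (v j) = kappa n c j s * fst (v j))}"
proof (intro set_eqI iffI)
  fix v assume "v \<in> Esum n c S s"
  then obtain F w where F: "finite F" "F \<subseteq> S" "\<forall>m\<in>F. w m \<in> Eig n c m s"
    and v: "v = (\<lambda>j. \<Sum>m\<in>F. w m j)" unfolding Esum_def by blast
  have vj: "v j = (if j \<in> F then w j j else 0)" for j
  proof -
    have "v j = (\<Sum>m\<in>F. if m = j then w j j else 0)"
      unfolding v using F(3) unfolding Eig_def by (intro sum.cong) auto
    also have "\<dots> = (if j \<in> F then w j j else 0)" using F(1) by (simp add: sum.delta)
    finally show ?thesis .
  qed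
  have "{m. v m \<noteq> 0} \<subseteq> F" using vj by auto
  then have "finite {m. v m \<noteq> 0}" using F(1) finite_subset by blast
  moreover have "\<forall>j. j \<notin> S \<longrightarrow> v j = 0" using vj F(2) by auto
  moreover have "\<forall>j. snd (v j) = kappa n c j s * fst (v j)"
  proof
    fix j show "snd (v j) = kappa n c j s * fst (v j)"
    proof (cases "j \<in> F")
      case True
      then have "Amul n c j (w j j) = cscale (kappa n c j s) (w j j)" using F(3) unfolding Eig_def by auto
      then show ?thesis using vj True by (simp add: Amul_eig)
    qed (simp add: vj)
  qed
  ultimately show "v \<in> {v. finite {m. v m \<noteq> 0} \<and> (\<forall>j. j \<notin> S \<longrightarrow> v j = 0)
            \<and> (\<forall>j. snd (v j) = kappa n c j s * fst (v j))}" by blast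
next
  fix v assume "v \<in> {v. finite {m. v m \<noteq> 0} \<and> (\<forall>j. j \<notin> S \<longrightarrow> v j = 0)
            \<and> (\<forall>j. snd (v j) = kappa n c j s * fst (v j))}"
  then have fin: "finite {m. v m \<noteq> 0}" and out: "\<And>j. j \<notin> S \<Longrightarrow> v j = 0"
    and eig: "\<And>j. snd (v j) = kappa n c j s * fst (v j)" by auto
  define F where "F = {m. v m \<noteq> 0}"
  define w where "w = (\<lambda>m j. if j = m then v m else (0::complex\<times>complex))"
  have "F \<subseteq> S" unfolding F_def using out by blast
  moreover have "\<forall>m\<in>F. w m \<in> Eig n c m s"
  proof
    fix m assume "m \<in> F"
    then have "m \<in> Zp n" using \<open>F \<subseteq> S\<close> assms by blast
    have "finite {j. w m j \<noteq> 0}" by (rule finite_subset[of _ "{m}"]) (auto simp: w_def)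
    moreover have "\<forall>j. j \<notin> Zp n \<longrightarrow> w m j = 0" using \<open>m \<in> Zp n\<close> by (auto simp: w_def)
    moreover have "Amul n c m (w m m) = cscale (kappa n c m s) (w m m)"
      unfolding Amul_eig w_def using eig[of m] by simp
    moreover have "\<forall>j. j \<noteq> m \<longrightarrow> w m j = 0" by (simp add: w_def)
    ultimately show "w m \<in> Eig n c m s" unfolding Eig_def phase_def by blast
  qed
  moreover have "v = (\<lambda>j. \<Sum>m\<in>F. w m j)"
  proof
    fix j
    have "(\<Sum>m\<in>F. w m j) = (if j \<in> F then v j else 0)"
      unfolding w_def using fin F_def by (simp add: sum.delta')
    then show "v j = (\<Sum>m\<in>F. w m j)" unfolding F_def by auto
  qed
  moreover have "finite F" using fin F_def by simp
  ultimately show "v \<in> Esum n c S s" unfolding Esum_def mem_Collect_eq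
    by (intro exI[of _ F] exI[of _ w]) simp
qed



lemma root_info:
  assumes "c > 0" "\<forall>m \<in> Zp n. real_of_int m \<noteq> ((real n)^2 + c^2) / (2*c)"
    and "(m, s) \<in> root_set n c k"
  shows "m \<in> Zp n \<and> ((dd n c m > 0 \<and> Re k \<noteq> 0 \<and> real_of_int m = c - 2 * Im k)
     \<or> (dd n c m < 0 \<and> Re k = 0 \<and> (real_of_int m + 2 * Im k)^2 = (real n)^2 + 4 * Im k * c))"
proof -
  have m: "m \<in> Zp n" and k: "kappa n c m s = k" using assms(3) unfolding root_set_def by auto
  have nz: "dd n c m \<noteq> 0" using dd_nz[OF assms(1,2) m] .
  show ?thesis
  proof (cases "dd n c m > 0")
    case True
    have "sqrt (dd n c m) > 0" using True by simp
    then have "Re k \<noteq> 0" using kappa_pos(1)[of n c m s] True k by (cases s) auto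
    moreover have "real_of_int m = c - 2 * Im k" using kappa_pos(2)[of n c m s] True k by auto
    ultimately show ?thesis using m True by auto
  next
    case False
    then have neg: "dd n c m < 0" using nz by auto
    define t where "t = Im k"
    have Re0: "Re k = 0" using kappa_neg(1)[of n c m s] neg k by auto
    have "2*t - c + real_of_int m = (if s then 1 else -1) * sqrt (- dd n c m)"
      using kappa_neg(2)[of n c m s] neg k unfolding t_def by auto
    then have "(2*t - c + real_of_int m)^2 = (sqrt (- dd n c m))^2"
      by (cases s) (simp_all add: power2_eq_square)
    also have "\<dots> = - dd n c m" using neg by simp
    finally have e: "(2*t - c + real_of_int m)^2 = - dd n c m" .
    have "(real_of_int m + 2 * t)^2 = (real n)^2 + 4 * t * c"
      using e unfolding dd_def power2_eq_square by (simp add: algebra_simps)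
    then show ?thesis using m neg Re0 unfolding t_def by auto
  qed
qed

lemma sq_cases: "(x::real)^2 = R \<Longrightarrow> x = sqrt R \<or> x = - sqrt R"
  by (metis real_sqrt_abs abs_if minus_minus)

lemma fst_inj:
  assumes "c > 0" "\<forall>m \<in> Zp n. real_of_int m \<noteq> ((real n)^2 + c^2) / (2*c)"
  shows "inj_on fst (root_set n c k)"
proof (rule inj_onI)
  fix x y assume x: "x \<in> root_set n c k" and y: "y \<in> root_set n c k" and f: "fst x = fst y"
  obtain m s where xs: "x = (m, s)" by (cases x)
  obtain s' where ys: "y = (m, s')" using f xs by (cases y) auto
  have m: "m \<in> Zp n" and "kappa n c m s = k" "kappa n c m s' = k" using x y xs ys unfolding root_set_def by auto
  then have "kappa n c m s = kappa n c m s'" by simp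
  moreover have "kappa n c m True \<noteq> kappa n c m False" using kappa_dist dd_nz[OF assms m] by blast
  ultimately have "s = s'" by (cases s; cases s') auto
  then show "x = y" using xs ys by simp
qed

lemma card_bound:
  assumes "c > 0" "\<forall>m \<in> Zp n. real_of_int m \<noteq> ((real n)^2 + c^2) / (2*c)"
    and "fst ` root_set n c k \<subseteq> {m. real_of_int m \<in> B}" "finite B"
  shows "finite (root_set n c k)" "root_mult n c k \<le> card B"
proof -
  have inj: "inj_on fst (root_set n c k)" using fst_inj[OF assms(1,2)] .
  have "finite {m. real_of_int m \<in> B}"
    using finite_vimageI[OF assms(4), of real_of_int] by (simp add: inj_on_def vimage_def)
  then have fin: "finite (fst ` root_set n c k)" using assms(3) finite_subset by blast
  then show "finite (root_set n c k)" using finite_imageD[OF _ inj] by blast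
  have "card (fst ` root_set n c k) \<le> card B"
    by (rule card_inj_on_le[of real_of_int]) (use assms(3,4) in \<open>auto simp: inj_on_def\<close>)
  then show "root_mult n c k \<le> card B" unfolding root_mult_def using card_image[OF inj] by simp
qed



lemma Esum_phase: "S \<subseteq> Zp n \<Longrightarrow> Esum n c S s \<subseteq> phase n"
  unfolding Esum_char phase_def by auto

lemma mem_Esum:
  assumes "S \<subseteq> Zp n" "finite {m. v m \<noteq> 0}" "\<And>j. j \<notin> S \<Longrightarrow> v j = 0"
    "\<And>j. snd (v j) = kappa n c j s * fst (v j)"
  shows "v \<in> Esum n c S s"
  using assms by (simp add: Esum_char)

lemma decomp_main:
  assumes c: "c > 0" and H: "\<forall>m \<in> Zp n. real_of_int m \<noteq> ((real n)^2 + c^2) / (2*c)"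
    and v: "v \<in> phase n"
  shows "\<exists>a b d e. a \<in> Es n c \<and> b \<in> Eu n c \<and> d \<in> Ecp n c \<and> e \<in> Ecm n c
            \<and> v = (\<lambda>j. a j + b j + d j + e j)"
proof -
  have fin: "finite {m. v m \<noteq> 0}" and out: "\<And>j. j \<notin> Zp n \<Longrightarrow> v j = 0"
    using v unfolding phase_def by auto
  define al where "al j = (snd (v j) - kappa n c j False * fst (v j)) / (kappa n c j True - kappa n c j False)" for j
  define P where "P j = (al j, kappa n c j True * al j)" for j
  define Q where "Q j = v j - P j" for j
  have P0: "P j = 0" if "v j = 0" for j using that by (simp add: P_def al_def zero_prod_def)
  have Q0: "Q j = 0" if "v j = 0" for j using that P0 by (simp add: Q_def)
  have Psnd: "snd (P j) = kappa n c j True * fst (P j)" for j by (simp add: P_def)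
  have Qsnd: "snd (Q j) = kappa n c j False * fst (Q j)" for j
  proof (cases "j \<in> Zp n")
    case True
    have ne: "kappa n c j True - kappa n c j False \<noteq> 0"
      using kappa_dist[OF dd_nz[OF c H True]] by simp
    then have "(kappa n c j True - kappa n c j False) * al j = snd (v j) - kappa n c j False * fst (v j)"
      by (simp add: al_def)
    then show ?thesis by (simp add: Q_def P_def algebra_simps)
  next
    case False then show ?thesis using Q0 out by (simp add: zero_prod_def)
  qed
  define a where "a j = (if j > m0 n c then P j else 0)" for j
  define b where "b j = (if j > m0 n c then Q j else 0)" for j
  define d where "d j = (if j > m0 n c then 0 else P j)" for j
  define e where "e j = (if j > m0 n c then 0 else Q j)" for j
  have sub: "\<And>f. (\<And>j. v j = 0 \<Longrightarrow> f j = 0) \<Longrightarrow> finite {m. f m \<noteq> (0::complex\<times>complex)}"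
    by (rule finite_subset[OF _ fin]) auto
  have "a \<in> Es n c" unfolding Es_def
    proof (rule mem_Esum)
    show "finite {m. a m \<noteq> 0}" by (rule sub) (simp add: a_def P0)
  qed (auto simp: a_def P0 out Psnd)
  moreover have "b \<in> Eu n c" unfolding Eu_def
    proof (rule mem_Esum)
    show "finite {m. b m \<noteq> 0}" by (rule sub) (simp add: b_def Q0)
  qed (auto simp: b_def Q0 out Qsnd)
  moreover have "d \<in> Ecp n c" unfolding Ecp_def
    proof (rule mem_Esum)
    show "finite {m. d m \<noteq> 0}" by (rule sub) (simp add: d_def P0)
  qed (auto simp: d_def P0 out Psnd)
  moreover have "e \<in> Ecm n c" unfolding Ecm_def
    proof (rule mem_Esum)
    show "finite {m. e m \<noteq> 0}" by (rule sub) (simp add: e_def Q0)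
  qed (auto simp: e_def Q0 out Qsnd)
  moreover have "v = (\<lambda>j. a j + b j + d j + e j)"
    by (auto simp: a_def b_def d_def e_def Q_def)
  ultimately show ?thesis by blast
qed



lemma uniq_main:
  assumes c: "c > 0" and H: "\<forall>m \<in> Zp n. real_of_int m \<noteq> ((real n)^2 + c^2) / (2*c)"
    and A: "a \<in> Es n c" "b \<in> Eu n c" "d \<in> Ecp n c" "e \<in> Ecm n c"
       "a' \<in> Es n c" "b' \<in> Eu n c" "d' \<in> Ecp n c" "e' \<in> Ecm n c"
    and eq: "(\<lambda>j. a j + b j + d j + e j) = (\<lambda>j. a' j + b' j + d' j + e' j)"
  shows "a = a' \<and> b = b' \<and> d = d' \<and> e = e'"
proof -
  have S1: "{m \<in> Zp n. m > m0 n c} \<subseteq> Zp n" and S2: "{m \<in> Zp n. m \<le> m0 n c} \<subseteq> Zp n" by auto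
  note ch1 = Esum_char[OF S1] and ch2 = Esum_char[OF S2]
  have a: "\<And>j. (j \<notin> Zp n \<or> \<not> j > m0 n c) \<Longrightarrow> a j = 0" "\<And>j. snd (a j) = kappa n c j True * fst (a j)"
    and a': "\<And>j. (j \<notin> Zp n \<or> \<not> j > m0 n c) \<Longrightarrow> a' j = 0" "\<And>j. snd (a' j) = kappa n c j True * fst (a' j)"
    using A(1,5) unfolding Es_def ch1 by auto
  have b: "\<And>j. (j \<notin> Zp n \<or> \<not> j > m0 n c) \<Longrightarrow> b j = 0" "\<And>j. snd (b j) = kappa n c j False * fst (b j)"
    and b': "\<And>j. (j \<notin> Zp n \<or> \<not> j > m0 n c) \<Longrightarrow> b' j = 0" "\<And>j. snd (b' j) = kappa n c j False * fst (b' j)"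
    using A(2,6) unfolding Eu_def ch1 by auto
  have d: "\<And>j. (j \<notin> Zp n \<or> \<not> j \<le> m0 n c) \<Longrightarrow> d j = 0" "\<And>j. snd (d j) = kappa n c j True * fst (d j)"
    and d': "\<And>j. (j \<notin> Zp n \<or> \<not> j \<le> m0 n c) \<Longrightarrow> d' j = 0" "\<And>j. snd (d' j) = kappa n c j True * fst (d' j)"
    using A(3,7) unfolding Ecp_def ch2 by auto
  have e: "\<And>j. (j \<notin> Zp n \<or> \<not> j \<le> m0 n c) \<Longrightarrow> e j = 0" "\<And>j. snd (e j) = kappa n c j False * fst (e j)"
    and e': "\<And>j. (j \<notin> Zp n \<or> \<not> j \<le> m0 n c) \<Longrightarrow> e' j = 0" "\<And>j. snd (e' j) = kappa n c j False * fst (e' j)"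
    using A(4,8) unfolding Ecm_def ch2 by auto
  have all: "a j = a' j \<and> b j = b' j \<and> d j = d' j \<and> e j = e' j" for j
  proof (cases "j \<in> Zp n")
    case False then show ?thesis using a a' b b' d d' e e' by simp
  next
    case True
    have ne: "kappa n c j True \<noteq> kappa n c j False" using kappa_dist[OF dd_nz[OF c H True]] .
    have ej: "a j + b j + d j + e j = a' j + b' j + d' j + e' j" using fun_cong[OF eq, of j] by simp
    show ?thesis
    proof (cases "j > m0 n c")
      case True
      then have "a j + b j = a' j + b' j" using ej d d' e e' by simp
      then show ?thesis using uniq2[OF ne a(2) b(2) a'(2) b'(2)] True d d' e e' by simp
    next
      case False
      then have "d j + e j = d' j + e' j" using ej a a' b b' by simp
      then show ?thesis using uniq2[OF ne d(2) e(2) d'(2) e'(2)] False a a' b b' by simp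
    qed
  qed
  then show ?thesis by (auto intro: ext)
qed

lemma semis_main:
  assumes c: "c > 0" and H: "\<forall>m \<in> Zp n. real_of_int m \<noteq> ((real n)^2 + c^2) / (2*c)"
  shows "semisimple n c k"
  unfolding semisimple_def Let_def
proof (intro ballI impI)
  fix v assume v: "v \<in> phase n"
    and h: "(\<lambda>m. Aop n c (\<lambda>m. Aop n c v m - cscale k (v m)) m - cscale k ((\<lambda>m. Aop n c v m - cscale k (v m)) m)) = (\<lambda>m. 0)"
  show "(\<lambda>m. Aop n c v m - cscale k (v m)) = (\<lambda>m. 0)"
  proof
    fix j
    have hj: "Amul n c j (Amul n c j (v j) - cscale k (v j)) - cscale k (Amul n c j (v j) - cscale k (v j)) = 0"
      using fun_cong[OF h, of j] by (simp add: Aop_def)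
    show "Aop n c v j - cscale k (v j) = 0"
    proof (cases "j \<in> Zp n")
      case True
      have ne: "kappa n c j True \<noteq> kappa n c j False" using kappa_dist[OF dd_nz[OF c H True]] .
      show ?thesis using semis2[OF ne, where k=k and w="v j"] hj by (simp add: Aop_def Amul_F)
    next
      case False
      then have "v j = 0" using v unfolding phase_def by auto
      then show ?thesis by (simp add: Aop_def Amul_F F_def cscale_def zero_prod_def)
    qed
  qed
qed

lemma zero_roots:
  assumes c: "c > 0" and H: "\<forall>m \<in> Zp n. real_of_int m \<noteq> ((real n)^2 + c^2) / (2*c)" and n: "n \<ge> 1"
  shows "{(int n, c < real n), (- int n, False)} \<subseteq> root_set n c 0"
proof -
  have Z1: "int n \<in> Zp n" and Z2: "- int n \<in> Zp n" by (auto simp: Zp_def)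
  have d1: "- dd n c (int n) = (c - real n)^2" by (simp add: dd_def power2_eq_square algebra_simps)
  have d2: "- dd n c (- int n) = (c + real n)^2" by (simp add: dd_def power2_eq_square algebra_simps)
  have k1: "kappa n c (int n) (c < real n) = 0"
  proof (rule complex_eqI)
    have "dd n c (int n) \<le> 0" using d1 by (smt (verit) zero_le_power2)
    then show "Re (kappa n c (int n) (c < real n)) = Re 0" "Im (kappa n c (int n) (c < real n)) = Im 0"
      using kappa_neg[of n c "int n" "c < real n"] unfolding d1 by (auto simp: abs_if split: if_splits)
  qed
  have k2: "kappa n c (- int n) False = 0"
  proof (rule complex_eqI)
    have "dd n c (- int n) \<le> 0" using d2 by (smt (verit) zero_le_power2)
    moreover have "\<bar>c + real n\<bar> = c + real n" using c by simp
    ultimately show "Re (kappa n c (- int n) False) = Re 0" "Im (kappa n c (- int n) False) = Im 0"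
      using kappa_neg[of n c "- int n" False] unfolding d2 by auto
  qed
  show ?thesis using Z1 Z2 k1 k2 unfolding root_set_def by auto
qed



lemma root_sub:
  fixes k :: complex
  assumes c: "c > 0" and H: "\<forall>m \<in> Zp n. real_of_int m \<noteq> ((real n)^2 + c^2) / (2*c)"
  defines "R \<equiv> (real n)^2 + 4 * Im k * c"
  shows "fst ` root_set n c k \<subseteq> {m. real_of_int m \<in> {c - 2 * Im k, - 2 * Im k + sqrt R, - 2 * Im k - sqrt R}}"
    and "Re k = 0 \<Longrightarrow> fst ` root_set n c k \<subseteq> {m. real_of_int m \<in> {- 2 * Im k + sqrt R, - 2 * Im k - sqrt R}}"
    and "Re k \<noteq> 0 \<Longrightarrow> fst ` root_set n c k \<subseteq> {m. real_of_int m \<in> {c - 2 * Im k}}"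
proof -
  have key: "(Re k \<noteq> 0 \<and> real_of_int m = c - 2 * Im k) \<or> (Re k = 0 \<and> (real_of_int m = - 2 * Im k + sqrt R \<or> real_of_int m = - 2 * Im k - sqrt R))"
    if "(m, s) \<in> root_set n c k" for m s
  proof -
    have "(dd n c m > 0 \<and> Re k \<noteq> 0 \<and> real_of_int m = c - 2 * Im k)
     \<or> (dd n c m < 0 \<and> Re k = 0 \<and> (real_of_int m + 2 * Im k)^2 = R)"
      using root_info[OF c H that] unfolding R_def by blast
    then show ?thesis
    proof
      assume "dd n c m < 0 \<and> Re k = 0 \<and> (real_of_int m + 2 * Im k)^2 = R"
      then have "Re k = 0" "real_of_int m + 2 * Im k = sqrt R \<or> real_of_int m + 2 * Im k = - sqrt R"
        using sq_cases by blast+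
      then show ?thesis by auto
    qed auto
  qed
  show "fst ` root_set n c k \<subseteq> {m. real_of_int m \<in> {c - 2 * Im k, - 2 * Im k + sqrt R, - 2 * Im k - sqrt R}}"
    using key by fastforce
  show "Re k = 0 \<Longrightarrow> fst ` root_set n c k \<subseteq> {m. real_of_int m \<in> {- 2 * Im k + sqrt R, - 2 * Im k - sqrt R}}"
    using key by fastforce
  show "Re k \<noteq> 0 \<Longrightarrow> fst ` root_set n c k \<subseteq> {m. real_of_int m \<in> {c - 2 * Im k}}"
    using key by fastforce
qed

lemma card2: "card {x::real, y} \<le> 2" by (simp add: card_insert_if)

theorem lemma1:
  fixes n :: nat and c :: real
  assumes "n \<ge> 1" and "c > 0"
    and "\<forall>m \<in> Zp n. real_of_int m \<noteq> ((real n)^2 + c^2) / (2*c)"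
  shows
    "(Es n c \<subseteq> phase n \<and> Eu n c \<subseteq> phase n \<and> Ecp n c \<subseteq> phase n \<and> Ecm n c \<subseteq> phase n)
     \<and> (\<forall>v \<in> phase n. \<exists>a b d e. a \<in> Es n c \<and> b \<in> Eu n c \<and> d \<in> Ecp n c \<and> e \<in> Ecm n c
            \<and> v = (\<lambda>j. a j + b j + d j + e j))
     \<and> (\<forall>a b d e a' b' d' e'. a \<in> Es n c \<and> b \<in> Eu n c \<and> d \<in> Ecp n c \<and> e \<in> Ecm n c
            \<and> a' \<in> Es n c \<and> b' \<in> Eu n c \<and> d' \<in> Ecp n c \<and> e' \<in> Ecm n c
            \<and> (\<lambda>j. a j + b j + d j + e j) = (\<lambda>j. a' j + b' j + d' j + e' j)
            \<longrightarrow> a = a' \<and> b = b' \<and> d = d' \<and> e = e')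
     \<and> (\<forall>m \<in> Zp n. m > m0 n c \<longrightarrow> Re (kappa n c m True) > 0 \<and> Re (kappa n c m False) < 0)
     \<and> (\<forall>m \<in> Zp n. m \<le> m0 n c \<longrightarrow> Re (kappa n c m True) = 0 \<and> Re (kappa n c m False) = 0)
     \<and> (\<forall>k. finite (root_set n c k))
     \<and> (root_mult n c 0 = 2 \<and> semisimple n c 0)
     \<and> (\<forall>t::real. root_mult n c (\<i> * complex_of_real t) \<le> 3 \<and> semisimple n c (\<i> * complex_of_real t))
     \<and> (\<forall>k. Re k \<noteq> 0 \<longrightarrow> root_mult n c k \<le> 1)"
proof -
  note n = assms(1) and c = assms(2) and H = assms(3)
  have P1: "Es n c \<subseteq> phase n \<and> Eu n c \<subseteq> phase n \<and> Ecp n c \<subseteq> phase n \<and> Ecm n c \<subseteq> phase n"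
    unfolding Es_def Eu_def Ecp_def Ecm_def by (intro conjI Esum_phase) auto
  have P2: "\<forall>v \<in> phase n. \<exists>a b d e. a \<in> Es n c \<and> b \<in> Eu n c \<and> d \<in> Ecp n c \<and> e \<in> Ecm n c
            \<and> v = (\<lambda>j. a j + b j + d j + e j)" using decomp_main[OF c H] by blast
  have P3: "\<forall>a b d e a' b' d' e'. a \<in> Es n c \<and> b \<in> Eu n c \<and> d \<in> Ecp n c \<and> e \<in> Ecm n c
            \<and> a' \<in> Es n c \<and> b' \<in> Eu n c \<and> d' \<in> Ecp n c \<and> e' \<in> Ecm n c
            \<and> (\<lambda>j. a j + b j + d j + e j) = (\<lambda>j. a' j + b' j + d' j + e' j)
            \<longrightarrow> a = a' \<and> b = b' \<and> d = d' \<and> e = e'" using uniq_main[OF c H] by blast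
  have P4: "\<forall>m \<in> Zp n. m > m0 n c \<longrightarrow> Re (kappa n c m True) > 0 \<and> Re (kappa n c m False) < 0"
  proof (intro ballI impI)
    fix m assume m: "m \<in> Zp n" "m > m0 n c"
    then have "\<not> real_of_int m \<le> ((real n)^2 + c^2) / (2*c)" using m0_prop[OF c m(1)] by simp
    then have "((real n)^2 + c^2) / (2*c) < real_of_int m" by simp
    then have "(real n)^2 + c^2 < real_of_int m * (2*c)" using c by (simp add: pos_divide_less_eq)
    then have dpos: "dd n c m > 0" unfolding dd_def by (simp add: algebra_simps)
    have sq: "sqrt (dd n c m) > 0" using dpos by simp
    have "Re (kappa n c m True) = sqrt (dd n c m) / 2" "Re (kappa n c m False) = - sqrt (dd n c m) / 2"
      using kappa_pos(1)[of n c m True] kappa_pos(1)[of n c m False] dpos by simp_all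
    then show "Re (kappa n c m True) > 0 \<and> Re (kappa n c m False) < 0" using sq by linarith
  qed
  have P5: "\<forall>m \<in> Zp n. m \<le> m0 n c \<longrightarrow> Re (kappa n c m True) = 0 \<and> Re (kappa n c m False) = 0"
  proof (intro ballI impI)
    fix m assume m: "m \<in> Zp n" "m \<le> m0 n c"
    then have "real_of_int m \<le> ((real n)^2 + c^2) / (2*c)" using m0_prop[OF c m(1)] by simp
    then have "real_of_int m * (2*c) \<le> (real n)^2 + c^2" using c by (simp add: pos_le_divide_eq)
    then have "dd n c m \<le> 0" unfolding dd_def by (simp add: algebra_simps)
    then show "Re (kappa n c m True) = 0 \<and> Re (kappa n c m False) = 0"
      using kappa_neg(1) by blast
  qed
  have P6: "\<forall>k. finite (root_set n c k)"
    using card_bound(1)[OF c H root_sub(1)[OF c H]] by blast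
  have Pi: "root_mult n c (\<i> * complex_of_real t) \<le> 2" for t
  proof -
    have "root_mult n c (\<i> * complex_of_real t) \<le> card {- 2 * Im (\<i> * complex_of_real t) + sqrt ((real n)^2 + 4 * Im (\<i> * complex_of_real t) * c),
        - 2 * Im (\<i> * complex_of_real t) - sqrt ((real n)^2 + 4 * Im (\<i> * complex_of_real t) * c)}"
      by (rule card_bound(2)[OF c H root_sub(2)[OF c H]]) auto
    then show ?thesis using card2 le_trans by blast
  qed
  have P7: "root_mult n c 0 = 2"
  proof -
    have "root_mult n c 0 \<le> 2" using Pi[of 0] by simp
    moreover have "card {(int n, c < real n), (- int n, False)} \<le> root_mult n c 0"
      unfolding root_mult_def by (rule card_mono[OF P6[rule_format] zero_roots[OF c H n]])
    moreover have "card {(int n, c < real n), (- int n, False)} = 2" using n by simp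
    ultimately show ?thesis by simp
  qed
  have P9: "\<forall>k. Re k \<noteq> 0 \<longrightarrow> root_mult n c k \<le> 1"
  proof (intro allI impI)
    fix k :: complex assume "Re k \<noteq> 0"
    then have "root_mult n c k \<le> card {c - 2 * Im k}"
      by (rule card_bound(2)[OF c H root_sub(3)[OF c H]]) auto
    then show "root_mult n c k \<le> 1" by simp
  qed
  have P8: "\<forall>t::real. root_mult n c (\<i> * complex_of_real t) \<le> 3 \<and> semisimple n c (\<i> * complex_of_real t)"
  proof
    fix t :: real
    show "root_mult n c (\<i> * complex_of_real t) \<le> 3 \<and> semisimple n c (\<i> * complex_of_real t)"
      using Pi[of t] semis_main[OF c H] by simp
  qed
  have P7': "root_mult n c 0 = 2 \<and> semisimple n c 0" using P7 semis_main[OF c H] by blast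
  show ?thesis 
    by (rule conjI[OF P1 conjI[OF P2 conjI[OF P3 conjI[OF P4 conjI[OF P5 conjI[OF P6 conjI[OF P7' conjI[OF P8 P9]]]]]]]])
qed

end
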